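(* Every span-word is accepted by $\widehat{\mathcal{T}_{p/q}}$; that is, for every $n\in\mathbb{N}$, the infinite word $M_n\ominus\mu_n$ is accepted by $\widehat{\mathcal{T}_{p/q}}$.
   Context: Let $p>q>1$ be coprime integers, $A_p=\{0,\dots,p-1\}$, $A_q=\{0,\dots,q-1\}$ and $B=\{p-(2q-1),\dots,p-1\}$. For $n\in\mathbb{N}$ and $a\in\mathbb{Z}$, let $\tau(n,a)=\frac{np+a}{q}$, defined only when $q$ divides $np+a$. Let $\mathcal{T}_{p/q}$ be the deterministic automaton with state set $\mathbb{N}$, alphabet $A_p$, initial state $0$, and transitions $n\xrightarrow{a}\tau(n,a)$ for $a\in A_p$ with $\tau(n,a)$ defined. Every state $n$ has exactly one outgoing transition labelled by a letter of $A_q$ and exactly one labelled by a letter of $\{p-q,\dots,p-1\}$; the minimal word $\mu_n\in A_q^{\omega}$ (resp. maximal word $M_n\in\{p-q,\dots,p-1\}^{\omega}$) is the unique infinite word over $A_q$ (resp. over $\{p-q,\dots,p-1\}$) labelling a path of $\mathcal{T}_{p/q}$ starting at $n$. The span-word of $n$ is $M_n\ominus\mu_n$, where $\ominus$ denotes letter-wise subtraction; it is a word over $B$. Let $\widehat{\mathcal{T}_{p/q}}$ be the deterministic automaton with state set $\mathbb{N}$, alphabet $B$, initial state $0$, and transitions $n\xrightarrow{a}\tau(n,a)$ for $a\in B$ with $\tau(n,a)$ defined. An infinite word is accepted by an automaton if every finite prefix labels a path starting at the initial state $0$. *)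

theory Defs
  imports Main
begin

text \<open>Rational base automata T_{p/q}. States are natural numbers, letters are integers.
  There is a transition n --a--> m iff tau(n,a) = (n*p + a)/q is defined (q divides n*p+a)
  and equals m.\<close>

definition tr :: "nat \<Rightarrow> nat \<Rightarrow> nat \<Rightarrow> int \<Rightarrow> nat \<Rightarrow> bool" where
  "tr p q n a m \<longleftrightarrow> int q * int m = int n * int p + a"

definition alphA :: "nat \<Rightarrow> int set" where
  "alphA k = {0..<int k}"

definition alphMax :: "nat \<Rightarrow> nat \<Rightarrow> int set" where
  "alphMax p q = {int p - int q..<int p}"

definition alphB :: "nat \<Rightarrow> nat \<Rightarrow> int set" where
  "alphB p q = {int p - (2 * int q - 1)..int p - 1}"

definition labels_inf :: "nat \<Rightarrow> nat \<Rightarrow> int set \<Rightarrow> nat \<Rightarrow> (nat \<Rightarrow> int) \<Rightarrow> bool" where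
  "labels_inf p q S n w \<longleftrightarrow>
     (\<exists>s :: nat \<Rightarrow> nat. s 0 = n \<and> (\<forall>i. w i \<in> S \<and> tr p q (s i) (w i) (s (Suc i))))"

definition labels_prefix :: "nat \<Rightarrow> nat \<Rightarrow> int set \<Rightarrow> nat \<Rightarrow> (nat \<Rightarrow> int) \<Rightarrow> nat \<Rightarrow> bool" where
  "labels_prefix p q S n w k \<longleftrightarrow>
     (\<exists>s :: nat \<Rightarrow> nat. s 0 = n \<and> (\<forall>i<k. w i \<in> S \<and> tr p q (s i) (w i) (s (Suc i))))"

definition minword :: "nat \<Rightarrow> nat \<Rightarrow> nat \<Rightarrow> (nat \<Rightarrow> int)" where
  "minword p q n = (THE w. labels_inf p q (alphA q) n w)"

definition maxword :: "nat \<Rightarrow> nat \<Rightarrow> nat \<Rightarrow> (nat \<Rightarrow> int)" where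
  "maxword p q n = (THE w. labels_inf p q (alphMax p q) n w)"

definition span_word :: "nat \<Rightarrow> nat \<Rightarrow> nat \<Rightarrow> (nat \<Rightarrow> int)" where
  "span_word p q n = (\<lambda>i. maxword p q n i - minword p q n i)"

definition accepted :: "nat \<Rightarrow> nat \<Rightarrow> int set \<Rightarrow> (nat \<Rightarrow> int) \<Rightarrow> bool" where
  "accepted p q S w \<longleftrightarrow> (\<forall>k. labels_prefix p q S 0 w k)"

end

theory Submission
  imports Defs
begin

fun smin :: "nat \<Rightarrow> nat \<Rightarrow> nat \<Rightarrow> nat \<Rightarrow> nat" where
  "smin p q n 0 = n"
| "smin p q n (Suc i) = (smin p q n i * p + q - 1) div q"

fun smax :: "nat \<Rightarrow> nat \<Rightarrow> nat \<Rightarrow> nat \<Rightarrow> nat" where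
  "smax p q n 0 = n"
| "smax p q n (Suc i) = ((smax p q n i + 1) * p - 1) div q"

definition wmin :: "nat \<Rightarrow> nat \<Rightarrow> nat \<Rightarrow> nat \<Rightarrow> int" where
  "wmin p q n i = int q * int (smin p q n (Suc i)) - int (smin p q n i) * int p"

definition wmax :: "nat \<Rightarrow> nat \<Rightarrow> nat \<Rightarrow> nat \<Rightarrow> int" where
  "wmax p q n i = int q * int (smax p q n (Suc i)) - int (smax p q n i) * int p"

lemma small_mult_zero:
  fixes d :: int
  assumes "0 < q" "q * d < q" "- q < q * d"
  shows "d = 0"
proof (rule ccontr)
  assume "d \<noteq> 0"
  then have "d \<ge> 1 \<or> d \<le> -1" by linarith
  then show False
  proof
    assume "d \<ge> 1" then have "q * d \<ge> q * 1" using assms by (intro mult_left_mono) auto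
    then show False using assms by linarith
  next
    assume "d \<le> -1" then have "q * d \<le> q * (-1)" using assms by (intro mult_left_mono) auto
    then show False using assms by linarith
  qed
qed

lemma labels_unique:
  assumes q: "0 < q" and S: "S \<subseteq> {c..<c + int q}"
    and h1: "labels_inf p q S n w1" and h2: "labels_inf p q S n w2"
  shows "w1 = w2"
proof -
  obtain s1 where s1: "s1 0 = n" "\<forall>i. w1 i \<in> S \<and> tr p q (s1 i) (w1 i) (s1 (Suc i))"
    using h1 unfolding labels_inf_def by blast
  obtain s2 where s2: "s2 0 = n" "\<forall>i. w2 i \<in> S \<and> tr p q (s2 i) (w2 i) (s2 (Suc i))"
    using h2 unfolding labels_inf_def by blast
  have eq: "s1 i = s2 i" for i
  proof (induction i)
    case 0 then show ?case using s1 s2 by simp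
  next
    case (Suc i)
    have t1: "int q * int (s1 (Suc i)) = int (s1 i) * int p + w1 i" and r1: "w1 i \<in> S"
      using s1(2) unfolding tr_def by auto
    have t2: "int q * int (s2 (Suc i)) = int (s2 i) * int p + w2 i" and r2: "w2 i \<in> S"
      using s2(2) unfolding tr_def by auto
    have "int q * (int (s1 (Suc i)) - int (s2 (Suc i))) = w1 i - w2 i"
      using t1 t2 Suc by (simp add: right_diff_distrib)
    moreover have "c \<le> w1 i" "w1 i < c + int q" "c \<le> w2 i" "w2 i < c + int q"
      using r1 r2 S by auto
    then have "w1 i - w2 i < int q" "- int q < w1 i - w2 i" by linarith+
    ultimately have "int (s1 (Suc i)) - int (s2 (Suc i)) = 0"
      using q by (intro small_mult_zero[of "int q"]) auto
    then show ?case by simp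
  qed
  show ?thesis
  proof
    fix i
    have "int q * int (s1 (Suc i)) = int (s1 i) * int p + w1 i"
      "int q * int (s2 (Suc i)) = int (s2 i) * int p + w2 i"
      using s1(2) s2(2) unfolding tr_def by auto
    then show "w1 i = w2 i" using eq[of i] eq[of "Suc i"] by simp
  qed
qed

lemma wmin_range:
  assumes "0 < q" shows "0 \<le> wmin p q n i \<and> wmin p q n i < int q"
proof -
  let ?x = "smin p q n i * p"
  have a: "q * ((?x + q - 1) div q) \<le> ?x + q - 1" by simp
  have b: "?x + q - 1 < q * ((?x + q - 1) div q) + q"
    using assms by (metis div_mult_mod_eq mod_less_divisor add_less_cancel_left mult.commute)
  have "wmin p q n i = int (q * ((?x + q - 1) div q)) - int ?x"
    unfolding wmin_def by simp
  with a b assms show ?thesis by linarith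
qed

lemma wmax_range:
  assumes "0 < q" "0 < p" shows "int p - int q \<le> wmax p q n i \<and> wmax p q n i < int p"
proof -
  let ?s = "smax p q n i"
  let ?X = "(?s + 1) * p - 1"
  have a: "q * (?X div q) \<le> ?X" by simp
  have b: "?X < q * (?X div q) + q"
    using assms by (metis div_mult_mod_eq mod_less_divisor add_less_cancel_left mult.commute)
  have X1: "(?s + 1) * p \<ge> 1" using assms by simp
  have X2: "?X + 1 = (?s + 1) * p" using X1 by simp
  have X3: "int ?X + 1 = (int ?s + 1) * int p"
    using arg_cong[OF X2, of int] by (simp add: algebra_simps)
  have X: "int ?X = int ?s * int p + int p - 1" using X3 by (simp add: algebra_simps)
  define Y where "Y = int (q * (?X div q))"
  define Z where "Z = int ?X"
  have a': "Y \<le> Z" using a unfolding Y_def Z_def by linarith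
  have b': "Z < Y + int q" using b unfolding Y_def Z_def by linarith
  have X': "Z = int ?s * int p + int p - 1" using X unfolding Z_def .
  have "wmax p q n i = Y - int ?s * int p"
    unfolding wmax_def Y_def by simp
  with a' b' X' show ?thesis by linarith
qed

lemma min_labels:
  assumes "0 < q" shows "labels_inf p q (alphA q) n (wmin p q n)"
  unfolding labels_inf_def
  apply (rule exI[of _ "smin p q n"])
  using wmin_range[OF assms] by (auto simp: tr_def alphA_def wmin_def)

lemma max_labels:
  assumes "0 < q" "0 < p" shows "labels_inf p q (alphMax p q) n (wmax p q n)"
  unfolding labels_inf_def
  apply (rule exI[of _ "smax p q n"])
  using wmax_range[OF assms] by (auto simp: tr_def alphMax_def wmax_def)

lemma minword_eq:
  assumes "0 < q" shows "minword p q n = wmin p q n"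
  unfolding minword_def
  apply (rule the_equality)
   apply (rule min_labels[OF assms])
  apply (rule labels_unique[OF assms, of "alphA q" 0])
  using min_labels[OF assms] by (auto simp: alphA_def)

lemma maxword_eq:
  assumes "0 < q" "0 < p" shows "maxword p q n = wmax p q n"
  unfolding maxword_def
  apply (rule the_equality)
   apply (rule max_labels[OF assms])
  apply (rule labels_unique[OF assms(1), of "alphMax p q" "int p - int q"])
  using max_labels[OF assms] by (auto simp: alphMax_def)

lemma smin_le_smax:
  assumes "q \<le> p" "0 < p" shows "smin p q n i \<le> smax p q n i"
proof (induction i)
  case 0 then show ?case by simp
next
  case (Suc i)
  have "smin p q n i * p \<le> smax p q n i * p" using Suc by simp
  then have "smin p q n i * p + q \<le> smax p q n i * p + p"
    using assms by linarith
  then have "smin p q n i * p + q - 1 \<le> (smax p q n i + 1) * p - 1"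
    by (simp add: algebra_simps diff_le_mono)
  then show ?case by (simp only: smin.simps smax.simps div_le_mono)
qed

theorem mainTheorem6:
  fixes p q n :: nat
  assumes "1 < q" and "q < p" and "coprime p q"
  shows "accepted p q (alphB p q) (span_word p q n)"
proof -
  have q: "0 < q" and p: "0 < p" using assms by auto
  have sw: "span_word p q n = (\<lambda>i. wmax p q n i - wmin p q n i)"
    unfolding span_word_def using minword_eq[OF q] maxword_eq[OF q p] by simp
  define d where "d i = smax p q n i - smin p q n i" for i
  have dI: "int (d i) = int (smax p q n i) - int (smin p q n i)" for i
    using smin_le_smax[of q p n i] assms unfolding d_def by simp
  have step: "\<forall>i. (wmax p q n i - wmin p q n i) \<in> alphB p q \<and>
      tr p q (d i) (wmax p q n i - wmin p q n i) (d (Suc i))"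
  proof
    fix i
    have r1: "0 \<le> wmin p q n i \<and> wmin p q n i < int q" using wmin_range[OF q] .
    have r2: "int p - int q \<le> wmax p q n i \<and> wmax p q n i < int p" using wmax_range[OF q p] .
    have "(wmax p q n i - wmin p q n i) \<in> alphB p q"
      using r1 r2 unfolding alphB_def by auto
    moreover have "tr p q (d i) (wmax p q n i - wmin p q n i) (d (Suc i))"
      unfolding tr_def dI wmax_def wmin_def by (simp add: algebra_simps)
    ultimately show "(wmax p q n i - wmin p q n i) \<in> alphB p q \<and>
      tr p q (d i) (wmax p q n i - wmin p q n i) (d (Suc i))" by blast
  qed
  have d0: "d 0 = 0" unfolding d_def by simp
  show ?thesis
    unfolding accepted_def labels_prefix_def sw
    using step d0 by blast
qed

end
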